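(* Let $s,t\in(0,\pi)$ with $s\ne t$, so that $P=(\cos t,\sin t)$ and $Q=(\cos s,\sin s)$ are two distinct points of the unit circle in the half-plane $y>0$. Consider $$f(u)=\frac{1}{\sqrt{\sin(t+u)}}+\frac{1}{\sqrt{\sin(s+u)}},$$ defined for all $u$ with $\sin(t+u)>0$ and $\sin(s+u)>0$. Then on the interval of definition $I=(-\min(s,t),\ \pi-\max(s,t))$ (which contains $0$), $f$ attains its minimum at $u_{\min}=\frac{\pi}{2}-\frac{s+t}{2}$ (the rotation by angle $u_{\min}$ takes $P,Q$ to points forming a segment parallel to the $x$-axis); $u_{\min}$ is the only critical point of $f$ on $I$, and $f$ is decreasing as $u$ increases in $I$ while $u<u_{\min}$. *)

theory Defs
  imports Complex_Main
begin

end

theory Submission imports Defs begin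

definition G :: "real \<Rightarrow> real" where "G y = cos y / (sin y * sqrt (sin y))"

lemma G_refl: "G (pi - x) = - G x" unfolding G_def by simp

lemma G_dec1: assumes "0 < x" "x < y" "y \<le> pi/2" shows "G y < G x"
proof -
  have sx: "0 < sin x" using assms by (intro sin_gt_zero) auto
  have sxy: "sin x < sin y" using assms by (intro sin_monotone_2pi) auto
  have cxy: "cos y < cos x" using assms by (intro cos_monotone_0_pi) auto
  have cy: "0 \<le> cos y" using assms by (intro cos_ge_zero) auto
  have d: "sin x * sqrt (sin x) < sin y * sqrt (sin y)"
    using sx sxy by (intro mult_strict_mono) auto
  have dp: "0 < sin x * sqrt (sin x)" using sx by simp
  have "cos y / (sin y * sqrt (sin y)) \<le> cos y / (sin x * sqrt (sin x))"
    using cy d dp by (intro divide_left_mono) auto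
  also have "\<dots> < cos x / (sin x * sqrt (sin x))"
    using cxy dp by (intro divide_strict_right_mono) auto
  finally show ?thesis unfolding G_def .
qed

lemma G_dec: assumes "0 < x" "x < y" "y < pi" shows "G y < G x"
proof -
  consider "y \<le> pi/2" | "pi/2 \<le> x" | "x < pi/2" "pi/2 < y" by linarith
  then show ?thesis
  proof cases
    case 1 then show ?thesis using G_dec1 assms by blast
  next
    case 2
    have "G (pi - x) < G (pi - y)" using assms 2 by (intro G_dec1) auto
    then show ?thesis by (simp add: G_refl)
  next
    case 3
    have "0 < sin x" "0 < sin y" using assms by (auto intro!: sin_gt_zero)
    moreover have "0 < cos x" using 3 assms by (intro cos_gt_zero) auto
    moreover have "cos y < 0"
    proof -
      have "0 < cos (pi - y)" using 3 assms by (intro cos_gt_zero) auto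
      then show ?thesis by simp
    qed
    ultimately show ?thesis unfolding G_def
      by (metis divide_neg_pos divide_pos_pos mult_pos_pos order.strict_trans real_sqrt_gt_zero)
  qed
qed

lemma der1: assumes "sin (c + x) > 0"
  shows "((\<lambda>u. 1 / sqrt (sin (c + u))) has_real_derivative (- G (c + x) / 2)) (at x)"
proof -
  have s: "((\<lambda>u. sqrt (sin (c + u))) has_real_derivative
     (inverse (sqrt (sin (c+x))) / 2 * cos (c + x))) (at x)"
  proof (rule DERIV_chain2[where f=sqrt])
    show "(sqrt has_real_derivative inverse (sqrt (sin (c + x))) / 2) (at (sin (c + x)))"
      using assms by (rule DERIV_real_sqrt)
    show "((\<lambda>u. sin (c + u)) has_real_derivative cos (c + x)) (at x)"
      by (auto intro!: derivative_eq_intros)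
  qed
  have "((\<lambda>u. 1 / sqrt (sin (c + u))) has_real_derivative
     (- (inverse (sqrt (sin (c+x))) / 2 * cos (c + x)) / (sqrt (sin (c+x)))^2)) (at x)"
    using DERIV_inverse_fun[OF s] assms
    unfolding divide_inverse by (simp add: power2_eq_square)
  moreover have "- (inverse (sqrt (sin (c+x))) / 2 * cos (c + x)) / (sqrt (sin (c+x)))^2
     = - G (c + x) / 2" using assms unfolding G_def by (simp add: field_simps)
  ultimately show ?thesis by metis
qed

theorem lemma1:
  fixes s t :: real and f :: "real \<Rightarrow> real"
  assumes "0 < s" "s < pi" "0 < t" "t < pi" "s \<noteq> t"
    and f_def: "\<And>u. f u = 1 / sqrt (sin (t + u)) + 1 / sqrt (sin (s + u))"
  defines "I \<equiv> {- min s t <..< pi - max s t}"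
    and "umin \<equiv> pi / 2 - (s + t) / 2"
  shows "0 \<in> I
    \<and> (\<forall>u\<in>I. sin (t + u) > 0 \<and> sin (s + u) > 0)
    \<and> umin \<in> I
    \<and> sin (t + umin) = sin (s + umin)
    \<and> (\<forall>u\<in>I. f umin \<le> f u)
    \<and> (\<forall>u\<in>I. f differentiable (at u))
    \<and> (\<forall>u\<in>I. (f has_real_derivative 0) (at u) \<longleftrightarrow> u = umin)
    \<and> (\<forall>x\<in>I. \<forall>y\<in>I. x < y \<and> y < umin \<longrightarrow> f y < f x)"
proof -
  have memI: "u \<in> I \<longleftrightarrow> 0 < t + u \<and> t + u < pi \<and> 0 < s + u \<and> s + u < pi" for u
    unfolding I_def by auto
  have I0: "0 \<in> I" using assms memI by auto
  have pos: "sin (t + u) > 0 \<and> sin (s + u) > 0" if "u \<in> I" for u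
    using that memI by (auto intro!: sin_gt_zero)
  have Um: "umin \<in> I" unfolding memI umin_def using assms(1-4) by (auto simp: field_simps)
  have seq: "sin (t + umin) = sin (s + umin)"
  proof -
    have h: "sin (pi/2 + x) = cos x" for x by (simp add: sin_add)
    have "t + umin = pi/2 + (t - s)/2" "s + umin = pi/2 + (s - t)/2"
      unfolding umin_def by (simp_all add: field_simps)
    then have "sin (t + umin) = cos ((t - s)/2)" "sin (s + umin) = cos ((s - t)/2)"
      using h by simp_all
    moreover have "cos ((s - t)/2) = cos ((t - s)/2)"
      by (metis cos_minus minus_diff_eq minus_divide_left)
    ultimately show ?thesis by simp
  qed
  define f' where "f' u = - G (t + u) / 2 + - G (s + u) / 2" for u
  have fe: "f = (\<lambda>u. 1 / sqrt (sin (t + u)) + 1 / sqrt (sin (s + u)))"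
    using f_def by auto
  have D: "(f has_real_derivative f' u) (at u)" if "u \<in> I" for u
    unfolding fe f'_def using pos[OF that] by (intro DERIV_add der1) auto
  have neg: "f' u < 0" if "u \<in> I" "u < umin" for u
  proof -
    have l: "t + u < pi - (s + u)" using that(2) unfolding umin_def by (simp add: field_simps)
    have "G (pi - (s + u)) < G (t + u)"
      using that(1) memI l by (intro G_dec) auto
    then show ?thesis unfolding f'_def G_refl by simp
  qed
  have posd: "f' u > 0" if "u \<in> I" "umin < u" for u
  proof -
    have l: "pi - (s + u) < t + u" using that(2) unfolding umin_def by (simp add: field_simps)
    have "G (t + u) < G (pi - (s + u))"
      using that(1) memI l by (intro G_dec) auto
    then show ?thesis unfolding f'_def G_refl by simp
  qed
  have zero: "f' umin = 0"
  proof -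
    have "t + umin = pi - (s + umin)" unfolding umin_def by (simp add: field_simps)
    then have "G (t + umin) = - G (s + umin)" using G_refl by metis
    then show ?thesis unfolding f'_def by simp
  qed
  have cont: "continuous_on {a..b} f" if "a \<in> I" "b \<in> I" for a b
  proof -
    have "{a..b} \<subseteq> I" using that unfolding I_def by auto
    then show ?thesis using D
      by (meson DERIV_isCont continuous_at_imp_continuous_on subsetD)
  qed
  have mn: "f umin \<le> f u" if "u \<in> I" for u
  proof (cases "u \<le> umin")
    case True
    have "f umin \<le> f u"
    proof (rule DERIV_nonpos_imp_decreasing_open[OF True _ cont[OF that Um]])
      fix x assume "u < x" "x < umin"
      then have "x \<in> I" using that Um unfolding I_def by auto
      then show "\<exists>y. DERIV f x :> y \<and> y \<le> 0" using D neg \<open>x < umin\<close> by (meson less_imp_le)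
    qed
    then show ?thesis .
  next
    case False
    then have F: "umin \<le> u" by simp
    show "f umin \<le> f u"
    proof (rule DERIV_nonneg_imp_increasing_open[OF F _ cont[OF Um that]])
      fix x assume "umin < x" "x < u"
      then have "x \<in> I" using that Um unfolding I_def by auto
      then show "\<exists>y. DERIV f x :> y \<and> y \<ge> 0" using D posd \<open>umin < x\<close> by (meson less_imp_le)
    qed
  qed
  have dif: "f differentiable (at u)" if "u \<in> I" for u
    using D[OF that] real_differentiable_def by blast
  have crit: "(f has_real_derivative 0) (at u) \<longleftrightarrow> u = umin" if "u \<in> I" for u
  proof
    assume "(f has_real_derivative 0) (at u)"
    then have "f' u = 0" using D[OF that] DERIV_unique by blast
    then show "u = umin" using neg[OF that] posd[OF that] by (metis less_irrefl linorder_neqE)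
  next
    assume "u = umin" then show "(f has_real_derivative 0) (at u)" using D[OF that] zero by simp
  qed
  have dec: "f y < f x" if "x \<in> I" "y \<in> I" "x < y" "y < umin" for x y
  proof (rule DERIV_neg_imp_decreasing[OF \<open>x < y\<close>])
    fix z assume "x \<le> z" "z \<le> y"
    then have "z \<in> I" using that unfolding I_def by auto
    then show "\<exists>d. DERIV f z :> d \<and> d < 0" using D neg \<open>z \<le> y\<close> \<open>y < umin\<close> by force
  qed
  show ?thesis using I0 pos Um seq mn dif crit dec by blast
qed

end
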